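(* Let $T$ be the regular rooted tree of valence $p\geq 2$ with the embedded wire diffeology $\mathcal{D}_T$, and equip $\operatorname{Aut}T$ with the functional diffeology. Let $P:\mathbb{R}\to\operatorname{Aut}T$ be a plot of this diffeology. Then each of the two sequences $(P(n))_{n\in\mathbb{N}}$ and $(P(-m))_{m\in\mathbb{N}}$ converges in the congruence topology on $\operatorname{Aut}T$.
   Context: Fix a finite alphabet $A$ with $|A|=p\geq 2$. The vertices of $T$ are the finite words over $A$ (the root is the empty word); the length $|u|$ of a word is its level; two vertices are joined by an edge iff they have the form $a_1\dots a_n$ and $a_1\dots a_na_{n+1}$. As a topological space, $T$ is the 1-dimensional CW complex obtained by realizing each edge as a copy of $[0,1]$, with its usual topology. $\operatorname{Aut}T$ is the group of bijections of the vertex set fixing the root and preserving adjacency; each is regarded as a homeomorphism of the geometric realization mapping each edge affinely onto its image edge. $\operatorname{Stab}(n)$ is the subgroup of automorphisms fixing every vertex of level $n$. The congruence topology on $\operatorname{Aut}T$ is the group topology in which the subgroups $\operatorname{Stab}(n)$, $n\in\mathbb{N}$, form a basis of neighbourhoods of the identity. A diffeology on a set $X$ is a collection of maps $U\to X$ ("plots"), $U$ ranging over open subsets of all $\mathbb{R}^n$, containing all constant maps, closed under precomposition with smooth maps, and satisfying the sheaf condition. The embedded wire diffeology $\mathcal{D}_T$ is the diffeology on $T$ generated by (i.e. the smallest diffeology containing) all maps $\gamma:\mathbb{R}\to T$ that are injective, continuous, and homeomorphisms onto their images. A map between diffeological spaces is smooth if it sends plots to plots. The functional diffeology on $C^\infty(T,T)$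 is the coarsest diffeology such that the evaluation map $C^\infty(T,T)\times T\to T$ is smooth (with the product diffeology, the coarsest making projections smooth); $\operatorname{Aut}T\subseteq C^\infty(T,T)$ carries the subset diffeology. Equivalently, $P:U\to\operatorname{Aut}T$ is a plot iff $(u,x)\mapsto P(u)(x)$ is smooth $U\times T\to T$. *)

theory Defs
  imports "HOL-Analysis.Analysis"
begin

text \<open>R^n is realised as the functions nat => real vanishing at all coordinates >= n,
  with the (product) topology, which on this subspace is the Euclidean one.\<close>

definition Rn :: "nat \<Rightarrow> (nat \<Rightarrow> real) set" where
  "Rn n = {x. \<forall>i\<ge>n. x i = 0}"

definition open_Rn :: "nat \<Rightarrow> (nat \<Rightarrow> real) set \<Rightarrow> bool" where
  "open_Rn n U \<longleftrightarrow> openin (top_of_set (Rn n)) U"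

definition has_partial :: "nat \<Rightarrow> ((nat \<Rightarrow> real) \<Rightarrow> real) \<Rightarrow> (nat \<Rightarrow> real) \<Rightarrow> real \<Rightarrow> bool" where
  "has_partial i f x d \<longleftrightarrow> ((\<lambda>t. f (x(i := x i + t))) has_real_derivative d) (at 0)"

text \<open>C-infinity real functions on an open U in R^n: continuous, and all partial derivatives
  exist and are again C-infinity (all iterated partial derivatives exist and are continuous).\<close>
coinductive smooth_fun :: "nat \<Rightarrow> (nat \<Rightarrow> real) set \<Rightarrow> ((nat \<Rightarrow> real) \<Rightarrow> real) \<Rightarrow> bool"
  for n :: nat and U :: "(nat \<Rightarrow> real) set" where
  "continuous_on U f \<Longrightarrow>
   (\<forall>i<n. \<exists>g. (\<forall>x\<in>U. has_partial i f x (g x)) \<and> smooth_fun n U g) \<Longrightarrow>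
   smooth_fun n U f"

definition smooth_map :: "nat \<Rightarrow> (nat \<Rightarrow> real) set \<Rightarrow> nat \<Rightarrow> ((nat \<Rightarrow> real) \<Rightarrow> (nat \<Rightarrow> real)) \<Rightarrow> bool" where
  "smooth_map m V n F \<longleftrightarrow> (\<forall>x\<in>V. F x \<in> Rn n) \<and> (\<forall>i<n. smooth_fun m V (\<lambda>x. F x i))"

text \<open>A diffeology on X: a set of plots (n, U, P), U open in R^n, P : U -> X
  (only the values of P on U matter).\<close>
definition is_diffeology :: "'x set \<Rightarrow> (nat \<times> (nat \<Rightarrow> real) set \<times> ((nat \<Rightarrow> real) \<Rightarrow> 'x)) set \<Rightarrow> bool" where
  "is_diffeology X D \<longleftrightarrow>
     (\<forall>n U P. (n, U, P) \<in> D \<longrightarrow> open_Rn n U \<and> P ` U \<subseteq> X) \<and>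
     (\<forall>n U c Q. open_Rn n U \<and> c \<in> X \<and> (\<forall>x\<in>U. Q x = c) \<longrightarrow> (n, U, Q) \<in> D) \<and>
     (\<forall>n U P m V F Q. (n, U, P) \<in> D \<and> open_Rn m V \<and> smooth_map m V n F \<and> F ` V \<subseteq> U
        \<and> (\<forall>x\<in>V. Q x = P (F x)) \<longrightarrow> (m, V, Q) \<in> D) \<and>
     (\<forall>n U P. open_Rn n U \<and> P ` U \<subseteq> X \<and>
        (\<forall>x\<in>U. \<exists>V. open_Rn n V \<and> x \<in> V \<and> V \<subseteq> U \<and> (n, V, P) \<in> D) \<longrightarrow> (n, U, P) \<in> D)"

definition generated_diffeology :: "'x set \<Rightarrow> (nat \<times> (nat \<Rightarrow> real) set \<times> ((nat \<Rightarrow> real) \<Rightarrow> 'x)) set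
    \<Rightarrow> (nat \<times> (nat \<Rightarrow> real) set \<times> ((nat \<Rightarrow> real) \<Rightarrow> 'x)) set" where
  "generated_diffeology X G = \<Inter>{D. is_diffeology X D \<and> G \<subseteq> D}"

text \<open>Vertices: words over the alphabet 'a (a finite type). A point of the realisation is
  either the root ([],0) or (w,t) with w nonempty and 0 < t \<le> 1: the point at parameter t
  on the edge from butlast w to w (t = 1 is the vertex w).\<close>

type_synonym 'a tpt = "'a list \<times> real"

definition Tpts :: "'a tpt set" where
  "Tpts = {([], 0)} \<union> {(w, t). w \<noteq> [] \<and> 0 < t \<and> t \<le> 1}"

definition vertex :: "'a list \<Rightarrow> 'a tpt" where
  "vertex v = (if v = [] then ([], 0) else (v, 1))"

definition edge_map :: "'a list \<Rightarrow> real \<Rightarrow> 'a tpt" where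
  "edge_map w s = (if s = 0 then vertex (butlast w) else (w, s))"

definition T_top :: "'a tpt topology" where
  "T_top = topology (\<lambda>U. U \<subseteq> Tpts \<and>
      (\<forall>w. w \<noteq> [] \<longrightarrow> openin (top_of_set {0..1}) {s \<in> {0..1}. edge_map w s \<in> U}))"

definition wire_generators :: "(nat \<times> (nat \<Rightarrow> real) set \<times> ((nat \<Rightarrow> real) \<Rightarrow> 'a tpt)) set" where
  "wire_generators = {(1, Rn 1, \<lambda>x. \<gamma> (x 0)) | \<gamma>. embedding_map euclideanreal T_top \<gamma>}"

definition D_T :: "(nat \<times> (nat \<Rightarrow> real) set \<times> ((nat \<Rightarrow> real) \<Rightarrow> 'a tpt)) set" where
  "D_T = generated_diffeology Tpts wire_generators"

definition adj :: "'a list \<Rightarrow> 'a list \<Rightarrow> bool" where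
  "adj u v \<longleftrightarrow> (\<exists>a. v = u @ [a]) \<or> (\<exists>a. u = v @ [a])"

definition AutT :: "('a list \<Rightarrow> 'a list) set" where
  "AutT = {\<sigma>. bij \<sigma> \<and> \<sigma> [] = [] \<and> (\<forall>u v. adj u v \<longleftrightarrow> adj (\<sigma> u) (\<sigma> v))}"

definition act :: "('a list \<Rightarrow> 'a list) \<Rightarrow> 'a tpt \<Rightarrow> 'a tpt" where
  "act \<sigma> p = (\<sigma> (fst p), snd p)"

definition Stab :: "nat \<Rightarrow> ('a list \<Rightarrow> 'a list) set" where
  "Stab n = {\<sigma> \<in> AutT. \<forall>v. length v = n \<longrightarrow> \<sigma> v = v}"

definition congruence_top :: "('a list \<Rightarrow> 'a list) topology" where
  "congruence_top = topology (\<lambda>U. U \<subseteq> AutT \<and>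
      (\<forall>\<sigma>\<in>U. \<exists>n. (\<lambda>\<tau>. \<sigma> \<circ> \<tau>) ` Stab n \<subseteq> U))"

text \<open>plots R -> Aut T of the functional diffeology: (u,x) |-> P(u)(x) is smooth R x T -> T,
  i.e. maps every plot of the product diffeology (a smooth f : U -> R paired with a plot
  Q of D_T) to a plot of D_T.\<close>
definition aut_plot :: "(real \<Rightarrow> ('a list \<Rightarrow> 'a list)) \<Rightarrow> bool" where
  "aut_plot P \<longleftrightarrow> (\<forall>u. P u \<in> AutT) \<and>
     (\<forall>n U f Q. open_Rn n U \<and> smooth_fun n U f \<and> (n, U, Q) \<in> D_T \<longrightarrow>
        (n, U, \<lambda>x. act (P (f x)) (Q x)) \<in> D_T)"

end

theory Submission
  imports Defs
begin

lemma T_top_istop: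
  "istopology (\<lambda>U::'a tpt set. U \<subseteq> Tpts \<and>
      (\<forall>w. w \<noteq> [] \<longrightarrow> openin (top_of_set {0..1}) {s \<in> {0..1}. edge_map w s \<in> U}))"
  unfolding istopology_def
proof (rule conjI; intro allI impI)
  fix S T :: "'a tpt set"
  assume S: "S \<subseteq> Tpts \<and> (\<forall>w. w \<noteq> [] \<longrightarrow> openin (top_of_set {0..1}) {s \<in> {0..1}. edge_map w s \<in> S})"
    and T: "T \<subseteq> Tpts \<and> (\<forall>w. w \<noteq> [] \<longrightarrow> openin (top_of_set {0..1}) {s \<in> {0..1}. edge_map w s \<in> T})"
  show "S \<inter> T \<subseteq> Tpts \<and> (\<forall>w. w \<noteq> [] \<longrightarrow> openin (top_of_set {0..1}) {s \<in> {0..1}. edge_map w s \<in> S \<inter> T})"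
  proof (intro conjI allI impI)
    show "S \<inter> T \<subseteq> Tpts" using S by blast
    fix w :: "'a list" assume "w \<noteq> []"
    have "{s \<in> {0..1}. edge_map w s \<in> S \<inter> T} = {s \<in> {0..1}. edge_map w s \<in> S} \<inter> {s \<in> {0..1}. edge_map w s \<in> T}"
      by blast
    then show "openin (top_of_set {0..1}) {s \<in> {0..1}. edge_map w s \<in> S \<inter> T}"
      using S T \<open>w \<noteq> []\<close> by (metis (no_types, lifting) openin_Int)
  qed
next
  fix K :: "'a tpt set set"
  assume K: "\<forall>S\<in>K. S \<subseteq> Tpts \<and> (\<forall>w. w \<noteq> [] \<longrightarrow> openin (top_of_set {0..1}) {s \<in> {0..1}. edge_map w s \<in> S})"
  show "\<Union>K \<subseteq> Tpts \<and> (\<forall>w. w \<noteq> [] \<longrightarrow> openin (top_of_set {0..1}) {s \<in> {0..1}. edge_map w s \<in> \<Union>K})"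
  proof (intro conjI allI impI)
    show "\<Union>K \<subseteq> Tpts" using K by blast
    fix w :: "'a list" assume "w \<noteq> []"
    have "{s \<in> {0..1}. edge_map w s \<in> \<Union>K} = \<Union>((\<lambda>S. {s \<in> {0..1}. edge_map w s \<in> S}) ` K)"
      by blast
    then show "openin (top_of_set {0..1}) {s \<in> {0..1}. edge_map w s \<in> \<Union>K}"
      using K \<open>w \<noteq> []\<close> by (auto intro!: openin_Union)
  qed
qed

lemma T_top_open:
  "openin T_top U \<longleftrightarrow> U \<subseteq> Tpts \<and>
      (\<forall>w. w \<noteq> [] \<longrightarrow> openin (top_of_set {0..1}) {s \<in> {0..1}. edge_map w s \<in> U})"
  unfolding T_top_def by (subst topology_inverse'[OF T_top_istop]) (rule refl)

definition SS :: "'a list \<Rightarrow> 'a tpt set" where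
  "SS w = {p. (fst p = w \<and> 1/2 < snd p \<and> snd p \<le> 1) \<or> (\<exists>a. fst p = w @ [a] \<and> 0 < snd p \<and> snd p < 1/2)}"

lemma edge_SS:
  assumes "w \<noteq> []" "w' \<noteq> []" "s \<in> {0..1}"
  shows "edge_map w' s \<in> SS w \<longleftrightarrow> (w' = w \<and> 1/2 < s) \<or> (butlast w' = w \<and> s < 1/2)"
proof (cases "s = 0")
  case True
  then show ?thesis using assms
    by (auto simp: edge_map_def vertex_def SS_def)
next
  case False
  then have s: "0 < s" "s \<le> 1" using assms by auto
  have "edge_map w' s = (w', s)" using False by (simp add: edge_map_def)
  moreover have "(\<exists>a. w' = w @ [a]) \<longleftrightarrow> butlast w' = w"
    using assms(2) by (metis append_butlast_last_id butlast_snoc)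
  ultimately show ?thesis using s by (auto simp: SS_def)
qed

lemma SS_sub: "w \<noteq> [] \<Longrightarrow> SS w \<subseteq> Tpts"
  unfolding SS_def Tpts_def by auto

lemma SS_open:
  assumes "w \<noteq> []"
  shows "openin T_top (SS w)"
  unfolding T_top_open
proof (intro conjI allI impI)
  show "SS w \<subseteq> Tpts" using assms by (rule SS_sub)
  fix w' :: "'a list" assume w': "w' \<noteq> []"
  define Op where "Op = (if w' = w then {1/2<..} else {}) \<union> (if butlast w' = w then {..<1/2} else ({}::real set))"
  have eq: "{s \<in> {0..1}. edge_map w' s \<in> SS w} = {0..1} \<inter> Op"
  proof (rule set_eqI)
    fix s :: real
    show "s \<in> {s \<in> {0..1}. edge_map w' s \<in> SS w} \<longleftrightarrow> s \<in> {0..1} \<inter> Op"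
    proof (cases "s \<in> {0..1}")
      case True
      then show ?thesis using edge_SS[OF assms w' True] unfolding Op_def by auto
    qed auto
  qed
  have "open Op" unfolding Op_def by auto
  then show "openin (top_of_set {0..1}) {s \<in> {0..1}. edge_map w' s \<in> SS w}"
    unfolding eq by (rule openin_open_Int)
qed

lemma topspace_T_top: "topspace (T_top::'a tpt topology) = Tpts"
proof -
  have e: "{s \<in> {0..1}. edge_map w s \<in> Tpts} = {0..1::real}" if "w \<noteq> []" for w :: "'a list"
    using that by (auto simp: edge_map_def vertex_def Tpts_def)
  have o: "openin T_top (Tpts::'a tpt set)"
    unfolding T_top_open using e by simp
  show ?thesis
  proof
    show "topspace T_top \<subseteq> (Tpts::'a tpt set)" unfolding topspace_def using T_top_open by blast
    show "(Tpts::'a tpt set) \<subseteq> topspace T_top" using openin_subset[OF o] .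
  qed
qed

definition Dc :: "(nat \<times> (nat \<Rightarrow> real) set \<times> ((nat \<Rightarrow> real) \<Rightarrow> 'a tpt)) set" where
  "Dc = {(n, U, Q). open_Rn n U \<and> Q ` U \<subseteq> Tpts \<and>
          (\<forall>w. w \<noteq> [] \<longrightarrow> openin (top_of_set U) {x \<in> U. Q x \<in> SS w})}"

lemma smooth_map_cont:
  assumes "smooth_map m V n F"
  shows "continuous_on V F"
proof (rule continuous_on_coordinatewise_then_product)
  fix i
  show "continuous_on V (\<lambda>x. F x i)"
  proof (cases "i < n")
    case True
    then have "smooth_fun m V (\<lambda>x. F x i)" using assms by (simp add: smooth_map_def)
    then show ?thesis by (cases rule: smooth_fun.cases) auto
  next
    case False
    then have "\<forall>x\<in>V. F x i = 0" using assms by (auto simp: smooth_map_def Rn_def)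
    then show ?thesis using continuous_on_const continuous_on_cong by (metis (no_types, lifting))
  qed
qed

lemma Dc_diffeology: "is_diffeology Tpts (Dc :: (nat \<times> (nat \<Rightarrow> real) set \<times> ((nat \<Rightarrow> real) \<Rightarrow> 'a tpt)) set)"
  unfolding is_diffeology_def
proof (intro conjI; intro allI impI)
  fix n U and P :: "(nat \<Rightarrow> real) \<Rightarrow> 'a tpt"
  assume "(n, U, P) \<in> Dc"
  then show "open_Rn n U \<and> P ` U \<subseteq> Tpts" by (simp add: Dc_def)
next
  fix n U c and Q :: "(nat \<Rightarrow> real) \<Rightarrow> 'a tpt"
  assume a: "open_Rn n U \<and> c \<in> Tpts \<and> (\<forall>x\<in>U. Q x = c)"
  have "openin (top_of_set U) {x \<in> U. Q x \<in> SS w}" for w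
  proof (cases "c \<in> SS w")
    case True
    then have "{x \<in> U. Q x \<in> SS w} = U" using a by auto
    then show ?thesis by simp
  next
    case False
    then have "{x \<in> U. Q x \<in> SS w} = {}" using a by auto
    then show ?thesis by (metis openin_empty)
  qed
  then show "(n, U, Q) \<in> Dc" using a by (auto simp: Dc_def)
next
  fix n U m V F and P Q :: "(nat \<Rightarrow> real) \<Rightarrow> 'a tpt"
  assume a: "(n, U, P) \<in> Dc \<and> open_Rn m V \<and> smooth_map m V n F \<and> F ` V \<subseteq> U \<and> (\<forall>x\<in>V. Q x = P (F x))"
  then have U: "openin (top_of_set (Rn n)) U" and P: "P ` U \<subseteq> Tpts"
    and PS: "\<And>w. w \<noteq> [] \<Longrightarrow> openin (top_of_set U) {x \<in> U. P x \<in> SS w}"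
    by (auto simp: Dc_def open_Rn_def)
  have cF: "continuous_on V F" using a smooth_map_cont by blast
  have "openin (top_of_set V) {x \<in> V. Q x \<in> SS w}" if "w \<noteq> []" for w
  proof -
    have "openin (top_of_set (Rn n)) {x \<in> U. P x \<in> SS w}"
      using openin_trans[OF PS[OF that] U] .
    then obtain Op where Op: "open Op" "{x \<in> U. P x \<in> SS w} = Rn n \<inter> Op"
      by (auto simp: openin_open)
    have FR: "\<forall>x\<in>V. F x \<in> Rn n" using a by (simp add: smooth_map_def)
    have "{x \<in> V. Q x \<in> SS w} = V \<inter> F -` Op"
    proof -
      have "x \<in> V \<Longrightarrow> Q x \<in> SS w \<longleftrightarrow> F x \<in> Op" for x
      proof -
        assume x: "x \<in> V"
        then have FU: "F x \<in> U" using a by blast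
        have "Q x \<in> SS w \<longleftrightarrow> F x \<in> {x \<in> U. P x \<in> SS w}" using x FU a by auto
        also have "\<dots> \<longleftrightarrow> F x \<in> Op" unfolding Op(2) using FR x by blast
        finally show ?thesis .
      qed
      then show ?thesis by auto
    qed
    then show ?thesis
      using cF Op(1) by (simp add: continuous_openin_preimage_gen)
  qed
  moreover have "Q ` V \<subseteq> Tpts" using a P by force
  ultimately show "(m, V, Q) \<in> Dc" using a by (auto simp: Dc_def)
next
  fix n U and P :: "(nat \<Rightarrow> real) \<Rightarrow> 'a tpt"
  assume a: "open_Rn n U \<and> P ` U \<subseteq> Tpts \<and>
        (\<forall>x\<in>U. \<exists>V. open_Rn n V \<and> x \<in> V \<and> V \<subseteq> U \<and> (n, V, P) \<in> Dc)"
  have "openin (top_of_set U) {x \<in> U. P x \<in> SS w}" if "w \<noteq> []" for w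
  proof (subst openin_subopen, intro ballI)
    fix x assume x: "x \<in> {x \<in> U. P x \<in> SS w}"
    then obtain V where V: "open_Rn n V" "x \<in> V" "V \<subseteq> U" "(n, V, P) \<in> Dc" using a by blast
    then have o1: "openin (top_of_set V) {x \<in> V. P x \<in> SS w}" using that by (simp add: Dc_def)
    have "openin (top_of_set (Rn n)) {x \<in> V. P x \<in> SS w}"
      using openin_trans[OF o1] V(1) by (simp add: open_Rn_def)
    moreover have "U \<subseteq> Rn n" using a unfolding open_Rn_def by (meson openin_imp_subset)
    ultimately have "openin (top_of_set U) {x \<in> V. P x \<in> SS w}"
      using V(3) by (elim openin_subset_trans) auto
    then show "\<exists>T. openin (top_of_set U) T \<and> x \<in> T \<and> T \<subseteq> {x \<in> U. P x \<in> SS w}"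
      using x V by blast
  qed
  then show "(n, U, P) \<in> Dc" using a by (auto simp: Dc_def)
qed

lemma gens_Dc: "wire_generators \<subseteq> (Dc :: (nat \<times> (nat \<Rightarrow> real) set \<times> ((nat \<Rightarrow> real) \<Rightarrow> 'a tpt)) set)"
proof
  fix g :: "nat \<times> (nat \<Rightarrow> real) set \<times> ((nat \<Rightarrow> real) \<Rightarrow> 'a tpt)"
  assume "g \<in> wire_generators"
  then have "\<exists>\<gamma>::real \<Rightarrow> 'a tpt. g = (1, Rn 1, \<lambda>x. \<gamma> (x 0)) \<and> embedding_map euclideanreal T_top \<gamma>"
    unfolding wire_generators_def by (simp only: mem_Collect_eq)
  then obtain \<gamma> :: "real \<Rightarrow> 'a tpt" where g: "g = (1, Rn 1, \<lambda>x. \<gamma> (x 0))"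
    and e: "embedding_map euclideanreal T_top \<gamma>"
    by (elim exE conjE)
  have c: "continuous_map euclideanreal T_top \<gamma>"
    using e unfolding embedding_map_def
    by (rule continuous_map_into_fulltopology[OF homeomorphic_imp_continuous_map])
  have img: "range \<gamma> \<subseteq> Tpts"
    using continuous_map_image_subset_topspace[OF c] unfolding topspace_T_top by simp
  have "openin (top_of_set (Rn 1)) {x \<in> Rn 1. \<gamma> (x 0) \<in> SS w}" if "w \<noteq> []" for w
  proof -
    have "openin euclideanreal {u \<in> topspace euclideanreal. \<gamma> u \<in> SS w}"
      using openin_continuous_map_preimage[OF c SS_open[OF that]] .
    then have o: "open (\<gamma> -` SS w)" by (simp add: vimage_def)
    have "{x \<in> Rn 1. \<gamma> (x 0) \<in> SS w} = Rn 1 \<inter> (\<lambda>x::nat\<Rightarrow>real. x 0) -` (\<gamma> -` SS w)" by auto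
    moreover have "open ((\<lambda>x::nat\<Rightarrow>real. x 0) -` (\<gamma> -` SS w))"
      by (rule open_vimage[OF o continuous_on_product_coordinates])
    ultimately show ?thesis by (simp only:) (rule openin_open_Int)
  qed
  moreover have "open_Rn 1 (Rn 1)" unfolding open_Rn_def by simp
  moreover have "(\<lambda>x. \<gamma> (x 0)) ` Rn 1 \<subseteq> Tpts" using img by blast
  ultimately show "g \<in> Dc" unfolding g Dc_def by simp
qed


lemma smooth_x0_aux:
  assumes "f = (\<lambda>x. x 0) \<or> (\<exists>c. f = (\<lambda>x. c))"
  shows "smooth_fun 1 U f"
  using assms
proof (coinduction arbitrary: f rule: smooth_fun.coinduct)
  case (smooth_fun f)
  then show ?case
  proof
    assume f: "f = (\<lambda>x. x 0)"
    have "continuous_on U f" unfolding f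
      by (rule continuous_on_subset[OF continuous_on_product_coordinates]) simp
    moreover have "has_partial 0 f x 1" for x
      unfolding f has_partial_def by (auto intro!: derivative_eq_intros)
    ultimately have "continuous_on U f \<and> (\<forall>i<1. \<exists>g. (\<forall>x\<in>U. has_partial i f x (g x)) \<and>
        ((\<exists>f. g = f \<and> (f = (\<lambda>x. x 0) \<or> (\<exists>c. f = (\<lambda>x. c)))) \<or> smooth_fun 1 U g))"
      by (auto intro!: exI[of _ "\<lambda>x. 1"])
    then show ?thesis by blast
  next
    assume "\<exists>c. f = (\<lambda>x. c)"
    then obtain c where f: "f = (\<lambda>x. c)" by blast
    have "has_partial 0 f x 0" for x
      unfolding f has_partial_def by (auto intro!: derivative_eq_intros)
    then have "continuous_on U f \<and> (\<forall>i<1. \<exists>g. (\<forall>x\<in>U. has_partial i f x (g x)) \<and>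
        ((\<exists>f. g = f \<and> (f = (\<lambda>x. x 0) \<or> (\<exists>c. f = (\<lambda>x. c)))) \<or> smooth_fun 1 U g))"
      unfolding f by (auto intro!: exI[of _ "\<lambda>x. 0"])
    then show ?thesis by blast
  qed
qed

lemma smooth_x0: "smooth_fun 1 U (\<lambda>x. x 0)"
  by (rule smooth_x0_aux) simp

lemma DT_Dc: "(D_T :: (nat \<times> (nat \<Rightarrow> real) set \<times> ((nat \<Rightarrow> real) \<Rightarrow> 'a tpt)) set) \<subseteq> Dc"
  unfolding D_T_def generated_diffeology_def
  by (rule Inter_lower) (simp add: Dc_diffeology gens_Dc)

lemma open_Rn1: "open_Rn 1 (Rn 1)" unfolding open_Rn_def by simp

lemma vertex_Tpts: "vertex v \<in> Tpts" by (simp add: vertex_def Tpts_def)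

lemma const_DT: "(1, Rn 1, \<lambda>x. vertex v) \<in> (D_T :: (nat \<times> (nat \<Rightarrow> real) set \<times> ((nat \<Rightarrow> real) \<Rightarrow> 'a tpt)) set)"
  unfolding D_T_def generated_diffeology_def
proof (rule InterI)
  fix D :: "(nat \<times> (nat \<Rightarrow> real) set \<times> ((nat \<Rightarrow> real) \<Rightarrow> 'a tpt)) set"
  assume "D \<in> {D. is_diffeology Tpts D \<and> wire_generators \<subseteq> D}"
  then have "is_diffeology Tpts D" by blast
  then have H: "\<forall>n U c Q. open_Rn n U \<and> c \<in> Tpts \<and> (\<forall>x\<in>U. Q x = c) \<longrightarrow> (n, U, Q) \<in> D"
    unfolding is_diffeology_def by (elim conjE)
  have I: "open_Rn 1 (Rn 1) \<and> vertex v \<in> Tpts \<and> (\<forall>x\<in>Rn 1. (\<lambda>x. vertex v) x = vertex v)"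
    using open_Rn1 vertex_Tpts by simp
  show "(1, Rn 1, \<lambda>x. vertex v) \<in> D"
    using mp[OF spec[OF spec[OF spec[OF spec[OF H, of 1], of "Rn 1"], of "vertex v"], of "\<lambda>x. vertex v"] I] .
qed

lemma act_vertex_SS: "v \<noteq> [] \<Longrightarrow> act \<sigma> (vertex v) \<in> SS w \<longleftrightarrow> \<sigma> v = w"
  by (simp add: act_def vertex_def SS_def)

lemma plot_open:
  fixes P :: "real \<Rightarrow> ('a list \<Rightarrow> 'a list)"
  assumes "aut_plot P" "v \<noteq> []" "w \<noteq> []"
  shows "open {u. P u v = w}"
proof -
  have "(1, Rn 1, \<lambda>x. act (P (x 0)) (vertex v)) \<in> (D_T :: (nat \<times> (nat \<Rightarrow> real) set \<times> ((nat \<Rightarrow> real) \<Rightarrow> 'a tpt)) set)"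
    using assms(1) open_Rn1 smooth_x0 const_DT unfolding aut_plot_def by blast
  then have "(1, Rn 1, \<lambda>x. act (P (x 0)) (vertex v)) \<in> Dc" using DT_Dc by blast
  then have "openin (top_of_set (Rn 1)) {x \<in> Rn 1. act (P (x 0)) (vertex v) \<in> SS w}"
    using assms(3) unfolding Dc_def by blast
  then have "openin (top_of_set (Rn 1)) {x \<in> Rn 1. P (x 0) v = w}"
    using act_vertex_SS[OF assms(2)] by simp
  then obtain Op where Op: "open Op" "{x \<in> Rn 1. P (x 0) v = w} = Rn 1 \<inter> Op"
    by (auto simp: openin_open)
  define e where "e = (\<lambda>u::real. \<lambda>i::nat. if i = 0 then u else 0)"
  have eR: "e u \<in> Rn 1" for u unfolding e_def Rn_def by simp
  have e0: "e u 0 = u" for u unfolding e_def by simp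
  have ce: "continuous_on UNIV e"
    unfolding e_def
  proof (rule continuous_on_coordinatewise_then_product)
    fix i :: nat
    show "continuous_on UNIV (\<lambda>u::real. if i = 0 then u else 0)"
      by (cases "i = 0") auto
  qed
  have "{u. P u v = w} = e -` Op"
  proof (rule set_eqI)
    fix u
    have "P u v = w \<longleftrightarrow> e u \<in> {x \<in> Rn 1. P (x 0) v = w}" using eR e0 by simp
    also have "\<dots> \<longleftrightarrow> e u \<in> Op" unfolding Op(2) using eR by blast
    finally show "u \<in> {u. P u v = w} \<longleftrightarrow> u \<in> e -` Op" by simp
  qed
  then show ?thesis using open_vimage[OF Op(1) ce] by simp
qed

lemma AutT_nonroot: "\<sigma> \<in> AutT \<Longrightarrow> v \<noteq> [] \<Longrightarrow> \<sigma> v \<noteq> []"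
  unfolding AutT_def by (metis (mono_tags, lifting) bij_pointE mem_Collect_eq)

lemma plot_const:
  fixes P :: "real \<Rightarrow> ('a list \<Rightarrow> 'a list)"
  assumes "aut_plot P"
  shows "P u = P 0"
proof
  fix v :: "'a list"
  have AP: "\<And>u. P u \<in> AutT" using assms unfolding aut_plot_def by blast
  show "P u v = P 0 v"
  proof (cases "v = []")
    case True
    then show ?thesis using AP unfolding AutT_def by simp
  next
    case False
    define w0 where "w0 = P 0 v"
    have w0: "w0 \<noteq> []" unfolding w0_def using AutT_nonroot[OF AP False] .
    define A where "A = {u. P u v = w0}"
    define B where "B = (\<Union>w\<in>{w. w \<noteq> [] \<and> w \<noteq> w0}. {u. P u v = w})"
    have oA: "open A" unfolding A_def using plot_open[OF assms False w0] .
    have oB: "open B" unfolding B_def using plot_open[OF assms False] by (intro open_UN) auto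
    have "A \<inter> B \<inter> UNIV = {}" unfolding A_def B_def by auto
    moreover have "UNIV \<subseteq> A \<union> B" unfolding A_def B_def using AutT_nonroot[OF AP False] by auto
    ultimately have "A \<inter> UNIV = {} \<or> B \<inter> UNIV = {}"
      using connectedD[OF connected_UNIV oA oB] by blast
    moreover have "0 \<in> A" unfolding A_def w0_def by simp
    ultimately have "B = {}" by blast
    then have "u \<in> A" using \<open>UNIV \<subseteq> A \<union> B\<close> by blast
    then show ?thesis unfolding A_def w0_def by simp
  qed
qed

lemma AutT_comp: "\<sigma> \<in> AutT \<Longrightarrow> \<tau> \<in> AutT \<Longrightarrow> \<sigma> \<circ> \<tau> \<in> AutT"
  unfolding AutT_def by (auto intro: bij_comp)

lemma two_elems:
  assumes "CARD('a::finite) \<ge> 2"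
  shows "\<exists>a b :: 'a. a \<noteq> b"
proof -
  have "\<not> (\<forall>a\<in>(UNIV::'a set). \<forall>b\<in>UNIV. a = b)"
    using assms card_le_Suc0_iff_eq[of "UNIV::'a set"] by auto
  then show ?thesis by blast
qed

lemma adj_two:
  assumes "adj x (v @ [a])" "adj x (v @ [b])" "a \<noteq> b"
  shows "x = v"
proof (rule ccontr)
  assume ne: "x \<noteq> v"
  have "\<not> (\<exists>c. v @ [a] = x @ [c])" using ne by auto
  then obtain c where c: "x = (v @ [a]) @ [c]" using assms(1) unfolding adj_def by blast
  have "\<not> (\<exists>d. v @ [b] = x @ [d])" using ne by auto
  then obtain d where d: "x = (v @ [b]) @ [d]" using assms(2) unfolding adj_def by blast
  from c d have "v @ [a] = v @ [b]" by simp
  then show False using assms(3) by simp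
qed

lemma Stab_Suc:
  assumes "CARD('a::finite) \<ge> 2"
  shows "(Stab (Suc k) :: ('a list \<Rightarrow> 'a list) set) \<subseteq> Stab k"
proof
  fix \<sigma> :: "'a list \<Rightarrow> 'a list"
  assume s: "\<sigma> \<in> Stab (Suc k)"
  obtain a b :: 'a where ab: "a \<noteq> b" using two_elems[OF assms] by blast
  have A: "\<sigma> \<in> AutT" using s unfolding Stab_def by blast
  have "\<sigma> v = v" if "length v = k" for v
  proof -
    have fa: "\<sigma> (v @ [a]) = v @ [a]" and fb: "\<sigma> (v @ [b]) = v @ [b]"
      using s that unfolding Stab_def by auto
    have aa: "adj v (v @ [a])" and bb: "adj v (v @ [b])" unfolding adj_def by auto
    have iff: "\<And>x y. adj x y \<longleftrightarrow> adj (\<sigma> x) (\<sigma> y)" using A unfolding AutT_def by blast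
    have "adj (\<sigma> v) (v @ [a])" using iff[of v "v @ [a]"] aa fa by simp
    moreover have "adj (\<sigma> v) (v @ [b])" using iff[of v "v @ [b]"] bb fb by simp
    ultimately show ?thesis using ab by (rule adj_two)
  qed
  then show "\<sigma> \<in> Stab k" using A unfolding Stab_def by blast
qed

lemma Stab_mono:
  assumes "CARD('a::finite) \<ge> 2" "m \<le> n"
  shows "(Stab n :: ('a list \<Rightarrow> 'a list) set) \<subseteq> Stab m"
  using lift_Suc_antimono_le[of "Stab :: nat \<Rightarrow> ('a list \<Rightarrow> 'a list) set", OF Stab_Suc[OF assms(1)] assms(2)] .

lemma cong_istop:
  assumes "CARD('a::finite) \<ge> 2"
  shows "istopology (\<lambda>U::('a list \<Rightarrow> 'a list) set. U \<subseteq> AutT \<and>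
      (\<forall>\<sigma>\<in>U. \<exists>n. (\<lambda>\<tau>. \<sigma> \<circ> \<tau>) ` Stab n \<subseteq> U))"
  unfolding istopology_def
proof (rule conjI; intro allI impI)
  fix S T :: "('a list \<Rightarrow> 'a list) set"
  assume S: "S \<subseteq> AutT \<and> (\<forall>\<sigma>\<in>S. \<exists>n. (\<lambda>\<tau>. \<sigma> \<circ> \<tau>) ` Stab n \<subseteq> S)"
    and T: "T \<subseteq> AutT \<and> (\<forall>\<sigma>\<in>T. \<exists>n. (\<lambda>\<tau>. \<sigma> \<circ> \<tau>) ` Stab n \<subseteq> T)"
  show "S \<inter> T \<subseteq> AutT \<and> (\<forall>\<sigma>\<in>S \<inter> T. \<exists>n. (\<lambda>\<tau>. \<sigma> \<circ> \<tau>) ` Stab n \<subseteq> S \<inter> T)"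
  proof (intro conjI ballI)
    show "S \<inter> T \<subseteq> AutT" using S by blast
    fix \<sigma> assume "\<sigma> \<in> S \<inter> T"
    then obtain n1 n2 where n1: "(\<lambda>\<tau>. \<sigma> \<circ> \<tau>) ` Stab n1 \<subseteq> S" and n2: "(\<lambda>\<tau>. \<sigma> \<circ> \<tau>) ` Stab n2 \<subseteq> T"
      using S T by blast
    have "Stab (max n1 n2) \<subseteq> (Stab n1 :: ('a list \<Rightarrow> 'a list) set)" "Stab (max n1 n2) \<subseteq> (Stab n2 :: ('a list \<Rightarrow> 'a list) set)"
      using Stab_mono[OF assms] by auto
    then have "(\<lambda>\<tau>. \<sigma> \<circ> \<tau>) ` Stab (max n1 n2) \<subseteq> S \<inter> T" using n1 n2 by blast
    then show "\<exists>n. (\<lambda>\<tau>. \<sigma> \<circ> \<tau>) ` Stab n \<subseteq> S \<inter> T" by blast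
  qed
next
  fix K :: "('a list \<Rightarrow> 'a list) set set"
  assume K: "\<forall>S\<in>K. S \<subseteq> AutT \<and> (\<forall>\<sigma>\<in>S. \<exists>n. (\<lambda>\<tau>. \<sigma> \<circ> \<tau>) ` Stab n \<subseteq> S)"
  show "\<Union>K \<subseteq> AutT \<and> (\<forall>\<sigma>\<in>\<Union>K. \<exists>n. (\<lambda>\<tau>. \<sigma> \<circ> \<tau>) ` Stab n \<subseteq> \<Union>K)"
  proof (intro conjI ballI)
    show "\<Union>K \<subseteq> AutT" using K by blast
    fix \<sigma> assume "\<sigma> \<in> \<Union>K"
    then obtain S where "S \<in> K" "\<sigma> \<in> S" by blast
    then obtain n where "(\<lambda>\<tau>. \<sigma> \<circ> \<tau>) ` Stab n \<subseteq> S" using K by blast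
    then show "\<exists>n. (\<lambda>\<tau>. \<sigma> \<circ> \<tau>) ` Stab n \<subseteq> \<Union>K" using \<open>S \<in> K\<close> by blast
  qed
qed

lemma AutT_topspace:
  assumes "CARD('a::finite) \<ge> 2"
  shows "(AutT :: ('a list \<Rightarrow> 'a list) set) \<subseteq> topspace congruence_top"
proof -
  have "openin congruence_top (AutT :: ('a list \<Rightarrow> 'a list) set)"
    unfolding congruence_top_def topology_inverse'[OF cong_istop[OF assms]]
  proof (intro conjI ballI)
    fix \<sigma> :: "'a list \<Rightarrow> 'a list" assume "\<sigma> \<in> AutT"
    then have "(\<lambda>\<tau>. \<sigma> \<circ> \<tau>) ` Stab 0 \<subseteq> AutT" unfolding Stab_def using AutT_comp by blast
    then show "\<exists>n. (\<lambda>\<tau>. \<sigma> \<circ> \<tau>) ` Stab n \<subseteq> AutT" by blast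
  qed simp
  then show ?thesis by (rule openin_subset)
qed

theorem mainTheorem4:
  fixes P :: "real \<Rightarrow> ('a::finite list \<Rightarrow> 'a list)"
  assumes "CARD('a) \<ge> 2"
    and "aut_plot P"
  shows "(\<exists>\<sigma>. limitin congruence_top (\<lambda>n::nat. P (real n)) \<sigma> sequentially)
       \<and> (\<exists>\<sigma>. limitin congruence_top (\<lambda>m::nat. P (- real m)) \<sigma> sequentially)"
proof -
  have c: "\<And>u. P u = P 0" using plot_const[OF assms(2)] .
  have "P 0 \<in> AutT" using assms(2) unfolding aut_plot_def by blast
  then have t: "P 0 \<in> topspace congruence_top" using AutT_topspace[OF assms(1)] by blast
  have e1: "(\<lambda>n::nat. P (real n)) = (\<lambda>n. P 0)" by (rule ext) (rule c)
  have e2: "(\<lambda>n::nat. P (- real n)) = (\<lambda>n. P 0)" by (rule ext) (rule c)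
  have "limitin congruence_top (\<lambda>n::nat. P (real n)) (P 0) sequentially"
    "limitin congruence_top (\<lambda>m::nat. P (- real m)) (P 0) sequentially"
    unfolding e1 e2 limitin_const_iff using t by auto
  then show ?thesis by blast
qed

end
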